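(* Let $X$ be a well-ordered set, $\Omega=\{P\}$ with $P$ unary, $\lambda\in K$, and equip $\mathfrak{S}(X)$ with the order $(1)$. Then $$S=\{P(x)P(y)-P(P(x)y)-P(xP(y))-\lambda P(xy)\mid x,y\in\mathfrak{S}(X)\}$$ is a Gröbner–Shirshov basis in $K\langle X;P\rangle$.
   Context: General setup. $K$ is a commutative ring with unit, $X$ a set, and $\Omega=\bigcup_{n\ge1}\Omega_n$ a set of operation symbols, $\Omega_n$ being the $n$-ary ones. For a set $A$ let $\Omega(A)=\{\delta(u_1,\dots,u_t)\mid t\ge1,\ \delta\in\Omega_t,\ u_i\in A\}$. $S(Y)$ is the free semigroup and $Y^*$ the free monoid on $Y$. $\mathfrak{S}_0=S(X)$, $\mathfrak{S}_n=S(X\cup\Omega(\mathfrak{S}_{n-1}))$, $\mathfrak{S}(X)=\bigcup_n\mathfrak{S}_n$ ($\Omega$-words); the depth $dep(u)$ is the least $n$ with $u\in\mathfrak{S}_n$. $K\langle X;\Omega\rangle$ is the free $K$-module on $\mathfrak{S}(X)$ with concatenation product and multilinearly extended operators (free associative algebra with operators $\Omega$); here $K\langle X;P\rangle$ denotes it for $\Omega=\{P\}$. Prime $\Omega$-words are elements of $X\cup\Omega(\mathfrak{S}(X))$; $bre(u)$ is the number of prime factors of $u$. $\mathfrak{S}^\star(X)$ is the set of elements of $\mathfrak{S}(X\cup\{\star\})$ with exactly one $\star$, and $u|_s$ is substitution of $s$ for $\star$. Monomial ordering: well order on $\mathfrak{S}(X)$ with $w>v\Rightarrow u|_w>u|_v$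 for $u\in\mathfrak{S}^\star(X)$. $\bar f$ = leading word; monic = leading coefficient $1$. Compositions of monic $f,g$: intersection $(f,g)_w=fa-bg$ when $w=\bar fa=b\bar g$, $a,b\in\mathfrak{S}(X)$, $bre(w)<bre(\bar f)+bre(\bar g)$; including $(f,g)_w=f-u|_g$ when $w=\bar f=u|_{\bar g}$, $u\in\mathfrak{S}^\star(X)$. $p\equiv q\ \mathrm{mod}(S,w)$ means $p-q=\sum\alpha_iu_i|_{s_i}$ with $s_i\in S$, $u_i\in\mathfrak{S}^\star(X)$, $u_i|_{\overline{s_i}}<w$. $S$ is a Gröbner–Shirshov basis if all compositions of elements of $S$ are $\equiv0\ \mathrm{mod}(S,w)$. Order (1): Let $X$ and $\Omega$ be well ordered and order $X^*$ by deg-lex (first by length, then lexicographically). Each $u\in\mathfrak{S}(X)$ is uniquely written $u=u_0\,\delta_1(\overrightarrow{x_1})\,u_1\cdots\delta_t(\overrightarrow{x_t})\,u_t$ with $t\ge0$, $u_i\in X^*$, $\delta_k\in\Omega_{i_k}$, $\overrightarrow{x_k}\in\mathfrak{S}(X)^{i_k}$. Set $wt(u)=(t,\delta_1,\overrightarrow{x_1},\dots,\delta_t,\overrightarrow{x_t},u_0,\dots,u_t)$, and define $u>v$ iff $wt(u)>wt(v)$ lexicographically, where integers are compared as usual, operators by the order of $\Omega$, words of $X^*$ by deg-lex, and tuples of $\Omega$-words lexicographically using the order being defined (by induction on $dep(u)+dep(v)$). *)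

theory Defs
  imports Main
begin

text \<open>A prime word is a letter of X or P applied to a word; a word is a list of prime
  words. Well-formedness (wfw) enforces that all words are nonempty (free semigroup).\<close>

datatype 'x prim = Ltr 'x | Pw "'x prim list"

type_synonym 'x word = "'x prim list"

fun wfp :: "'x prim \<Rightarrow> bool" where
  "wfp (Ltr x) = True"
| "wfp (Pw u) = (u \<noteq> [] \<and> (\<forall>p\<in>set u. wfp p))"

definition wfw :: "'x word \<Rightarrow> bool" where
  "wfw u = (u \<noteq> [] \<and> (\<forall>p\<in>set u. wfp p))"

definition bre :: "'x word \<Rightarrow> nat" where
  "bre u = length u"

text \<open>u = u0 P(x1) u1 ... P(xt) ut: tcount = t, args = [x1,...,xt], xsegs = [u0,...,ut]\<close>

fun tcount :: "'x word \<Rightarrow> nat" where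
  "tcount [] = 0"
| "tcount (Ltr x # u) = tcount u"
| "tcount (Pw v # u) = Suc (tcount u)"

fun args :: "'x word \<Rightarrow> 'x word list" where
  "args [] = []"
| "args (Ltr x # u) = args u"
| "args (Pw v # u) = v # args u"

fun xsegs :: "'x word \<Rightarrow> 'x list list" where
  "xsegs [] = [[]]"
| "xsegs (Ltr x # u) = (case xsegs u of [] \<Rightarrow> [[x]] | s # ss \<Rightarrow> (x # s) # ss)"
| "xsegs (Pw v # u) = [] # xsegs u"

definition tlex :: "('a \<Rightarrow> 'a \<Rightarrow> bool) \<Rightarrow> 'a list \<Rightarrow> 'a list \<Rightarrow> bool" where
  "tlex r xs ys = (length xs = length ys \<and>
     (\<exists>i<length xs. take i xs = take i ys \<and> r (xs ! i) (ys ! i)))"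

definition dlless :: "'x::wellorder list \<Rightarrow> 'x list \<Rightarrow> bool" where
  "dlless xs ys = (length xs < length ys \<or>
     (length xs = length ys \<and> (\<exists>i<length xs. take i xs = take i ys \<and> xs ! i < ys ! i)))"

text \<open>wless u v means u < v in order (1), defined by induction on depth
  (the only operator is P, so operator comparisons are trivial).\<close>
inductive wless :: "'x::wellorder word \<Rightarrow> 'x word \<Rightarrow> bool" where
  tless: "tcount u < tcount v \<Longrightarrow> wless u v"
| argless: "tcount u = tcount v \<Longrightarrow> length (args u) = length (args v) \<Longrightarrow>
     i < length (args u) \<Longrightarrow> take i (args u) = take i (args v) \<Longrightarrow>
     wless (args u ! i) (args v ! i) \<Longrightarrow> wless u v"
| segless: "tcount u = tcount v \<Longrightarrow> args u = args v \<Longrightarrow>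
     tlex dlless (xsegs u) (xsegs v) \<Longrightarrow> wless u v"

type_synonym ('x, 'k) poly = "'x word \<Rightarrow> 'k"

definition supp :: "('x, 'k::zero) poly \<Rightarrow> 'x word set" where
  "supp p = {w. p w \<noteq> 0}"

definition mon :: "'x word \<Rightarrow> ('x, 'k::{zero,one}) poly" where
  "mon u = (\<lambda>w. if w = u then 1 else 0)"

definition pmul :: "('x, 'k::comm_ring_1) poly \<Rightarrow> ('x, 'k) poly \<Rightarrow> ('x, 'k) poly" where
  "pmul p q = (\<lambda>w. \<Sum>i\<le>length w. p (take i w) * q (drop i w))"

definition lead :: "('x::wellorder, 'k::zero) poly \<Rightarrow> 'x word" where
  "lead p = (THE w. w \<in> supp p \<and> (\<forall>v\<in>supp p. v \<noteq> w \<longrightarrow> wless v w))"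

definition monic :: "('x::wellorder, 'k::comm_ring_1) poly \<Rightarrow> bool" where
  "monic p = (finite (supp p) \<and> supp p \<noteq> {} \<and> p (lead p) = 1)"

text \<open>Star-words: words over X + {star} (Ltr None is the star) with exactly one star.\<close>
fun nstar :: "'x option prim \<Rightarrow> nat" where
  "nstar (Ltr None) = 1"
| "nstar (Ltr (Some x)) = 0"
| "nstar (Pw u) = sum_list (map nstar u)"

definition starw :: "'x option word \<Rightarrow> bool" where
  "starw u = (wfw u \<and> sum_list (map nstar u) = 1)"

fun substp :: "'x option prim \<Rightarrow> 'x word \<Rightarrow> 'x word" where
  "substp (Ltr None) s = s"
| "substp (Ltr (Some x)) s = [Ltr x]"
| "substp (Pw u) s = [Pw (concat (map (\<lambda>p. substp p s) u))]"

definition substw :: "'x option word \<Rightarrow> 'x word \<Rightarrow> 'x word" where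
  "substw u s = concat (map (\<lambda>p. substp p s) u)"

definition substpoly :: "'x option word \<Rightarrow> ('x, 'k::comm_ring_1) poly \<Rightarrow> ('x, 'k) poly" where
  "substpoly u f = (\<lambda>w. \<Sum>v\<in>{v\<in>supp f. substw u v = w}. f v)"

definition cong_mod :: "('x::wellorder, 'k::comm_ring_1) poly set \<Rightarrow> 'x word \<Rightarrow>
    ('x, 'k) poly \<Rightarrow> ('x, 'k) poly \<Rightarrow> bool" where
  "cong_mod S w p q = (\<exists>ts :: ('k \<times> 'x option word \<times> ('x, 'k) poly) list.
     (\<forall>(a, u, s)\<in>set ts. s \<in> S \<and> starw u \<and> wless (substw u (lead s)) w) \<and>
     (\<forall>v. p v - q v = sum_list (map (\<lambda>(a, u, s). a * substpoly u s v) ts)))"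

definition GSB :: "('x::wellorder, 'k::comm_ring_1) poly set \<Rightarrow> bool" where
  "GSB S = (\<forall>f\<in>S. \<forall>g\<in>S. monic f \<and> monic g \<longrightarrow>
     (\<forall>w a b. wfw a \<and> wfw b \<and> w = lead f @ a \<and> w = b @ lead g \<and>
        bre w < bre (lead f) + bre (lead g) \<longrightarrow>
        cong_mod S w (\<lambda>v. pmul f (mon a) v - pmul (mon b) g v) (\<lambda>_. 0)) \<and>
     (\<forall>w u. starw u \<and> w = lead f \<and> w = substw u (lead g) \<longrightarrow>
        cong_mod S w (\<lambda>v. f v - substpoly u g v) (\<lambda>_. 0)))"

definition rbrel :: "'k::comm_ring_1 \<Rightarrow> 'x word \<Rightarrow> 'x word \<Rightarrow> ('x, 'k) poly" where
  "rbrel lam x y = (\<lambda>w. mon [Pw x, Pw y] w - mon [Pw (Pw x # y)] w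
      - mon [Pw (x @ [Pw y])] w - lam * mon [Pw (x @ y)] w)"

end

theory Submission
  imports Defs
begin

lemma tcount_append[simp]: "tcount (a @ b) = tcount a + tcount b"
  by (induction a rule: tcount.induct) auto

lemma args_append[simp]: "args (a @ b) = args a @ args b"
  by (induction a rule: args.induct) auto

lemma wless_tcount: "wless u v \<Longrightarrow> tcount u \<le> tcount v"
  by (induction rule: wless.induct) auto

lemma substw_Nil[simp]: "substw [] s = []" by (simp add: substw_def)
lemma substw_Cons[simp]: "substw (p # u) s = substp p s @ substw u s" by (simp add: substw_def)
lemma substw_append[simp]: "substw (u @ v) s = substw u s @ substw v s" by (simp add: substw_def)
lemma substp_Pw: "substp (Pw u) s = [Pw (substw u s)]" by (simp add: substw_def)
declare substp.simps(3)[simp del]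
declare substp_Pw[simp]

definition lift :: "'x word \<Rightarrow> 'x option word" where
  "lift u = map (map_prim Some) u"

lemma lift_prim: "substp (map_prim Some p) s = [p] \<and> nstar (map_prim Some p) = 0 \<and> (wfp p \<longrightarrow> wfp (map_prim Some p))"
proof (induction p)
  case (Ltr x) then show ?case by simp
next
  case (Pw u)
  have a: "substw (map (map_prim Some) u) s = u" using Pw
    by (induction u) auto
  have b: "sum_list (map nstar (map (map_prim Some) u)) = 0" using Pw
    by (induction u) auto
  have c: "wfp (Pw u) \<longrightarrow> wfp (Pw (map (map_prim Some) u))" using Pw by auto
  show ?case using a b c by simp
qed

lemma substw_lift[simp]: "substw (lift u) s = u"
  by (induction u) (auto simp: lift_def lift_prim)

lemma nstar_lift[simp]: "sum_list (map nstar (lift u)) = 0"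
  by (induction u) (auto simp: lift_def lift_prim)

lemma wfp_lift: "\<forall>p\<in>set u. wfp p \<Longrightarrow> \<forall>p\<in>set (lift u). wfp p"
  by (induction u) (auto simp: lift_def lift_prim)

lemma decomp: "sum_list (map nstar v) = 1 \<Longrightarrow> \<exists>pre q post. v = pre @ q # post \<and>
   sum_list (map nstar pre) = 0 \<and> nstar q = 1 \<and> sum_list (map nstar post) = 0"
proof (induction v)
  case Nil then show ?case by simp
next
  case (Cons a v)
  show ?case
  proof (cases "nstar a = 0")
    case True
    then have "sum_list (map nstar v) = 1" using Cons.prems by simp
    then obtain pre q post where "v = pre @ q # post \<and>
   sum_list (map nstar pre) = 0 \<and> nstar q = 1 \<and> sum_list (map nstar post) = 0" using Cons.IH by blast
    then show ?thesis using True by (intro exI[of _ "a # pre"]) auto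
  next
    case False
    have "nstar a + sum_list (map nstar v) = 1" using Cons.prems by simp
    then have "nstar a = 1" "sum_list (map nstar v) = 0" using False by linarith+
    then show ?thesis by (intro exI[of _ "[]"] exI[of _ a] exI[of _ v]) simp
  qed
qed

lemma nstar0_const: "nstar p = 0 \<Longrightarrow> substp p s = substp p s'"
proof (induction p)
  case (Ltr x) then show ?case by (cases x) auto
next
  case (Pw u)
  have "\<forall>q\<in>set u. nstar q = 0" using Pw.prems by simp
  then have "map (\<lambda>p. substp p s) u = map (\<lambda>p. substp p s') u"
    using Pw.IH by (intro map_cong) auto
  then have "substw u s = substw u s'" unfolding substw_def by (rule arg_cong)
  then show ?case by simp
qed

lemma nstar0w_const: "sum_list (map nstar u) = 0 \<Longrightarrow> substw u s = substw u s'"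
  by (induction u) (auto intro: nstar0_const)

lemma inj_prim: "nstar p = 1 \<Longrightarrow> substp p a = substp p b \<Longrightarrow> a = b"
proof (induction p)
  case (Ltr x) then show ?case by (cases x) auto
next
  case (Pw u)
  from Pw.prems(1) have "sum_list (map nstar u) = 1" by simp
  then obtain pre q post where d: "u = pre @ q # post" "sum_list (map nstar pre) = 0" "nstar q = 1"
     "sum_list (map nstar post) = 0" using decomp by blast
  from Pw.prems(2) have "substw u a = substw u b" by simp
  hence "substw pre a @ substp q a @ substw post a = substw pre a @ substp q b @ substw post a"
    using d nstar0w_const[of pre a b] nstar0w_const[of post a b] by simp
  hence "substp q a = substp q b" by simp
  moreover have "q \<in> set u" using d by simp
  ultimately show ?case using Pw.IH d by blast
qed

lemma inj_word: "sum_list (map nstar u) = 1 \<Longrightarrow> inj (substw u)"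
proof (rule injI)
  fix a b assume h: "sum_list (map nstar u) = 1" "substw u a = substw u b"
  then obtain pre q post where d: "u = pre @ q # post" "sum_list (map nstar pre) = 0" "nstar q = 1"
     "sum_list (map nstar post) = 0" using decomp by blast
  hence "substw pre a @ substp q a @ substw post a = substw pre a @ substp q b @ substw post a"
    using h nstar0w_const[of pre a b] nstar0w_const[of post a b] by simp
  hence "substp q a = substp q b" by simp
  then show "a = b" using inj_prim d by blast
qed

definition R :: "'x::wellorder word \<Rightarrow> 'x word \<Rightarrow> bool" where
  "R A B = (tcount A < tcount B \<or> (\<exists>a b. A = [Pw a] \<and> B = [Pw b] \<and> wless a b))"

lemma ctx: "R A B \<Longrightarrow> wless (C @ A @ D) (C @ B @ D)"
  unfolding R_def
proof (elim disjE exE conjE)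
  assume "tcount A < tcount B" then show ?thesis by (intro wless.tless) simp
next
  fix a b assume h: "A = [Pw a]" "B = [Pw b]" "wless a b"
  show ?thesis unfolding h
    by (rule wless.argless[where i="length (args C)"]) (use h in auto)
qed

lemma mono_prim: "nstar p = 1 \<Longrightarrow> tcount h < tcount H \<Longrightarrow> R (substp p h) (substp p H)"
proof (induction p)
  case (Ltr x) then show ?case by (cases x) (auto simp: R_def)
next
  case (Pw u)
  from Pw.prems(1) have "sum_list (map nstar u) = 1" by simp
  then obtain pre q post where d: "u = pre @ q # post" "sum_list (map nstar pre) = 0" "nstar q = 1"
     "sum_list (map nstar post) = 0" using decomp by blast
  have "R (substp q h) (substp q H)" using Pw d by simp
  hence "wless (substw pre h @ substp q h @ substw post h) (substw pre h @ substp q H @ substw post h)"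
    by (rule ctx)
  hence "wless (substw u h) (substw u H)"
    using d nstar0w_const[of pre h H] nstar0w_const[of post h H] by simp
  then show ?case by (simp add: R_def)
qed

lemma mono_word: "sum_list (map nstar u) = 1 \<Longrightarrow> tcount h < tcount H \<Longrightarrow> wless (substw u h) (substw u H)"
proof -
  assume h: "sum_list (map nstar u) = 1" "tcount h < tcount H"
  then obtain pre q post where d: "u = pre @ q # post" "sum_list (map nstar pre) = 0" "nstar q = 1"
     "sum_list (map nstar post) = 0" using decomp by blast
  have "R (substp q h) (substp q H)" using h d mono_prim by blast
  hence "wless (substw pre h @ substp q h @ substw post h) (substw pre h @ substp q H @ substw post h)"
    by (rule ctx)
  thus ?thesis using d nstar0w_const[of pre h H] nstar0w_const[of post h H] by simp
qed

lemma wf_subst_prim: "wfp p \<Longrightarrow> wfw s \<Longrightarrow> substp p s \<noteq> [] \<and> (\<forall>q \<in> set (substp p s). wfp q)"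
proof (induction p)
  case (Ltr x) then show ?case by (cases x) (auto simp: wfw_def)
next
  case (Pw u)
  have "substw u s \<noteq> [] \<and> (\<forall>q \<in> set (substw u s). wfp q)"
    using Pw by (auto simp: substw_def neq_Nil_conv)
  then show ?case by simp
qed

lemma wfw_subst: "wfw u \<Longrightarrow> wfw s \<Longrightarrow> wfw (substw u s)"
  using wf_subst_prim by (auto simp: wfw_def substw_def neq_Nil_conv)

lemma len_subst: "s \<noteq> [] \<Longrightarrow> length u \<le> length (substw u s)"
proof (induction u)
  case Nil then show ?case by simp
next
  case (Cons p u)
  have "substp p s \<noteq> []" using Cons.prems by (induction p s rule: substp.induct) auto
  then have "1 \<le> length (substp p s)" by (cases "substp p s") auto
  then show ?case using Cons by simp
qed

lemma rbrel_supp: "rbrel lam x y v \<noteq> 0 \<Longrightarrow>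
  v \<in> {[Pw x, Pw y], [Pw (Pw x # y)], [Pw (x @ [Pw y])], [Pw (x @ y)]}"
  by (auto simp: rbrel_def mon_def split: if_splits)

lemma lead_rbrel:
  assumes nt: "(1::'k::comm_ring_1) \<noteq> 0"
  shows "lead (rbrel (lam::'k) x y :: ('x::wellorder,'k) poly) = [Pw x, Pw y]"
proof -
  let ?W = "[Pw x, Pw y] :: 'x word"
  let ?f = "rbrel lam x y :: ('x,'k) poly"
  have inW: "?W \<in> supp ?f" using nt by (simp add: supp_def rbrel_def mon_def)
  have t1: "v \<in> supp ?f \<Longrightarrow> v \<noteq> ?W \<Longrightarrow> tcount v = 1" for v
    using rbrel_supp[of lam x y v] by (auto simp: supp_def)
  show ?thesis unfolding lead_def
  proof (rule the_equality)
    show "?W \<in> supp ?f \<and> (\<forall>v\<in>supp ?f. v \<noteq> ?W \<longrightarrow> wless v ?W)"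
      using inW t1 by (auto intro: wless.tless)
  next
    fix w assume h: "w \<in> supp ?f \<and> (\<forall>v\<in>supp ?f. v \<noteq> w \<longrightarrow> wless v w)"
    show "w = ?W"
    proof (rule ccontr)
      assume ne: "w \<noteq> ?W"
      then have "wless ?W w" using h inW by auto
      then have "tcount ?W \<le> tcount w" by (rule wless_tcount)
      moreover have "tcount w = 1" using t1 h ne by blast
      ultimately show False by simp
    qed
  qed
qed

lemma monic_nt: "monic (f :: ('x::wellorder,'k::comm_ring_1) poly) \<Longrightarrow> (1::'k) \<noteq> 0"
proof
  assume "monic f" "(1::'k) = 0"
  then obtain v where "f v \<noteq> 0" by (auto simp: monic_def supp_def)
  moreover have "f v = f v * 1" by simp
  ultimately show False using \<open>(1::'k) = 0\<close> by simp
qed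

lemma mon_inj: "inj F \<Longrightarrow> mon (F A) (F v) = mon A v"
  by (auto simp: mon_def inj_eq)

lemma substpoly_rbrel:
  assumes "sum_list (map nstar u) = 1"
  shows "substpoly u (rbrel lam a b) w = mon (substw u [Pw a, Pw b]) w - mon (substw u [Pw (Pw a # b)]) w
     - mon (substw u [Pw (a @ [Pw b])]) w - lam * mon (substw u [Pw (a @ b)]) w"
proof -
  have inj: "inj (substw u)" using assms by (rule inj_word)
  show ?thesis
  proof (cases "\<exists>v. substw u v = w")
    case True
    then obtain v where v: "w = substw u v" by auto
    have "{v' \<in> supp (rbrel lam a b). substw u v' = w} = (if v \<in> supp (rbrel lam a b) then {v} else {})"
      using inj v by (auto simp: inj_eq)
    then have "substpoly u (rbrel lam a b) w = rbrel lam a b v"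
      by (auto simp: substpoly_def supp_def)
    then show ?thesis using v by (simp add: mon_inj[OF inj] rbrel_def)
  next
    case False
    then have "{v' \<in> supp (rbrel lam a b). substw u v' = w} = {}" by auto
    then show ?thesis using False by (auto simp: substpoly_def mon_def)
  qed
qed

lemma pmul_mon_mon: "pmul (mon A) (mon B) w = (mon (A @ B) w :: 'k::comm_ring_1)"
proof -
  have "(\<Sum>i\<le>length w. mon A (take i w) * mon B (drop i w) :: 'k) =
        (\<Sum>i\<le>length w. if i = length A \<and> w = A @ B then 1 else 0)"
  proof (rule sum.cong)
    fix i assume i: "i \<in> {..length w}"
    have "(take i w = A \<and> drop i w = B) \<longleftrightarrow> (i = length A \<and> w = A @ B)"
      using i by (auto simp: min_def)
    then show "mon A (take i w) * mon B (drop i w) = (if i = length A \<and> w = A @ B then 1 else (0::'k))"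
      by (auto simp: mon_def)
  qed simp
  also have "\<dots> = mon (A @ B) w" by (auto simp: mon_def)
  finally show ?thesis by (simp add: pmul_def)
qed

lemma pmul_rbrel_mon: "pmul (rbrel lam x y) (mon B) w =
   mon ([Pw x, Pw y] @ B) w - mon ([Pw (Pw x # y)] @ B) w - mon ([Pw (x @ [Pw y])] @ B) w - lam * mon ([Pw (x @ y)] @ B) w"
proof -
  have "pmul (rbrel lam x y) (mon B) w = pmul (mon [Pw x, Pw y]) (mon B) w - pmul (mon [Pw (Pw x # y)]) (mon B) w
     - pmul (mon [Pw (x @ [Pw y])]) (mon B) w - lam * pmul (mon [Pw (x @ y)]) (mon B) w"
    unfolding pmul_def rbrel_def
    by (simp add: algebra_simps sum_subtractf sum_distrib_left sum.distrib)
  then show ?thesis by (simp only: pmul_mon_mon)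
qed

lemma pmul_mon_rbrel: "pmul (mon B) (rbrel lam x y) w =
   mon (B @ [Pw x, Pw y]) w - mon (B @ [Pw (Pw x # y)]) w - mon (B @ [Pw (x @ [Pw y])]) w - lam * mon (B @ [Pw (x @ y)]) w"
proof -
  have "pmul (mon B) (rbrel lam x y) w = pmul (mon B) (mon [Pw x, Pw y]) w - pmul (mon B) (mon [Pw (Pw x # y)]) w
     - pmul (mon B) (mon [Pw (x @ [Pw y])]) w - lam * pmul (mon B) (mon [Pw (x @ y)]) w"
    unfolding pmul_def rbrel_def
    by (simp add: algebra_simps sum_subtractf sum_distrib_left sum.distrib)
  then show ?thesis by (simp only: pmul_mon_mon)
qed

lemma substp_nonempty: "s \<noteq> [] \<Longrightarrow> substp p s \<noteq> []"
  by (induction p s rule: substp.induct) auto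

lemma shape:
  assumes "starw u" "[Pw x, Pw y] = substw u [Pw x', Pw y']"
  shows "u = [Ltr None] \<or> (\<exists>v1 v2. u = [Pw v1, Pw v2])"
proof -
  have "u \<noteq> []" using assms(1) by (simp add: starw_def wfw_def)
  moreover have "length u \<le> 2" using len_subst[of "[Pw x', Pw y']" u] by (simp add: assms(2)[symmetric])
  ultimately obtain q rest where u: "u = q # rest" and lr: "length rest \<le> 1" by (cases u) auto
  show ?thesis
  proof (cases rest)
    case Nil
    then have e: "[Pw x, Pw y] = substp q [Pw x', Pw y']" using assms(2) u by simp
    show ?thesis
    proof (cases q)
      case (Ltr c) then show ?thesis using e u Nil by (cases c) auto
    next
      case (Pw v) then show ?thesis using e by simp
    qed
  next
    case (Cons q2 rest2)
    then have r2: "rest2 = []" using lr by simp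
    then have e: "[Pw x, Pw y] = substp q [Pw x', Pw y'] @ substp q2 [Pw x', Pw y']"
      using assms(2) u Cons by simp
    have ne: "substp q2 [Pw x', Pw y'] \<noteq> []" "substp q [Pw x', Pw y'] \<noteq> []"
      by (simp_all add: substp_nonempty)
    obtain v1 where q: "q = Pw v1"
    proof (cases q)
      case (Ltr c) then show ?thesis using e ne by (cases c) auto
    next
      case (Pw v) then show ?thesis using that by simp
    qed
    obtain v2 where q2: "q2 = Pw v2"
    proof (cases q2)
      case (Ltr c) then show ?thesis using e ne q by (cases c) auto
    next
      case (Pw v) then show ?thesis using that by simp
    qed
    show ?thesis using u Cons r2 q q2 by simp
  qed
qed

theorem theorem4p1:
  fixes lam :: "'k::comm_ring_1"
  shows "GSB {(rbrel lam x y :: ('x::wellorder, 'k) poly) | x y. wfw x \<and> wfw y}"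
proof -
  define S where "S = {(rbrel lam x y :: ('x::wellorder, 'k) poly) | x y. wfw x \<and> wfw y}"
  have inS: "\<And>a b. wfw a \<Longrightarrow> wfw b \<Longrightarrow> rbrel lam a b \<in> S" unfolding S_def by blast
  have st0: "starw [Ltr None :: 'x option prim]" by (simp add: starw_def wfw_def)
  have "GSB S" unfolding GSB_def
  proof (intro ballI impI)
    fix f g assume fS: "f \<in> S" and gS: "g \<in> S" and mn: "monic f \<and> monic g"
    obtain x y where f: "f = rbrel lam x y" and wx: "wfw x" and wy: "wfw y" using fS S_def by blast
    obtain x' y' where g: "g = rbrel lam x' y'" and wx': "wfw x'" and wy': "wfw y'" using gS S_def by blast
    have nt: "(1::'k) \<noteq> 0" using mn monic_nt by blast
    have lf: "lead f = [Pw x, Pw y]" using lead_rbrel[OF nt] f by simp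
    have lg: "lead g = [Pw x', Pw y']" using lead_rbrel[OF nt] g by simp
    show "(\<forall>w a b. wfw a \<and> wfw b \<and> w = lead f @ a \<and> w = b @ lead g \<and>
        bre w < bre (lead f) + bre (lead g) \<longrightarrow>
        cong_mod S w (\<lambda>v. pmul f (mon a) v - pmul (mon b) g v) (\<lambda>_. 0)) \<and>
     (\<forall>w u. starw u \<and> w = lead f \<and> w = substw u (lead g) \<longrightarrow>
        cong_mod S w (\<lambda>v. f v - substpoly u g v) (\<lambda>_. 0))"
    proof (intro conjI allI impI)
      fix w a b assume h: "wfw a \<and> wfw b \<and> w = lead f @ a \<and> w = b @ lead g \<and>
        bre w < bre (lead f) + bre (lead g)"
      from h have w1: "w = lead f @ a" and bw: "bre w < bre (lead f) + bre (lead g)" by blast+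
      have l1: "length w = 2 + length a" using w1 lf by simp
      have l2: "length w < 4" using bw lf lg by (simp add: bre_def)
      have "length a < 2" using l1 l2 by linarith
      moreover have "a \<noteq> []" using h by (simp add: wfw_def)
      ultimately obtain a1 where a: "a = [a1]" by (cases a) auto
      have "length b = 1" proof -
        from h have "w = b @ lead g" by blast
        then have "length w = length b + 2" using lg by simp
        then show ?thesis using l1 a by simp
      qed
      then obtain b1 where b: "b = [b1]" by (cases b) auto
      have "w = lead f @ a" "w = b @ lead g" using h by blast+
      then have e: "[Pw x, Pw y, a1] = [b1, Pw x', Pw y']" using lf lg a b by simp
      then have xe: "x' = y" and b1: "b1 = Pw x" and a1: "a1 = Pw y'" by auto
      define z where "z = y'"
      have wz: "wfw z" using wy' z_def by simp
      have w: "w = [Pw x, Pw y, Pw z]" using h lf a a1 z_def by simp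
      have g': "g = rbrel lam y z" using g xe z_def by simp
      have ws: "wfw (Pw x # y)" "wfw (x @ [Pw y])" "wfw (x @ y)" "wfw (Pw y # z)" "wfw (y @ [Pw z])" "wfw (y @ z)"
        using wx wy wz by (auto simp: wfw_def)
      have st1: "starw [Pw (Ltr None # lift z)]" using wz wfp_lift[of z]
        by (simp add: starw_def wfw_def)
      have st2: "starw [Pw (lift x @ [Ltr None])]" using wx wfp_lift[of x]
        by (simp add: starw_def wfw_def)
      show "cong_mod S w (\<lambda>v. pmul f (mon a) v - pmul (mon b) g v) (\<lambda>_. 0)"
        unfolding cong_mod_def
      proof (rule exI[where x="[(-1, [Ltr None], rbrel lam (Pw x # y) z), (-1, [Ltr None], rbrel lam (x @ [Pw y]) z),
           (-lam, [Ltr None], rbrel lam (x @ y) z), (1, [Ltr None], rbrel lam x (Pw y # z)),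
           (1, [Ltr None], rbrel lam x (y @ [Pw z])), (lam, [Ltr None], rbrel lam x (y @ z)),
           (1, [Pw (Ltr None # lift z)], rbrel lam x y), (-1, [Pw (lift x @ [Ltr None])], rbrel lam y z)]"],
          intro conjI)
        show "\<forall>(a, u, s)\<in>set [(-1, [Ltr None], rbrel lam (Pw x # y) z), (-1, [Ltr None], rbrel lam (x @ [Pw y]) z),
           (-lam, [Ltr None], rbrel lam (x @ y) z), (1, [Ltr None], rbrel lam x (Pw y # z)),
           (1, [Ltr None], rbrel lam x (y @ [Pw z])), (lam, [Ltr None], rbrel lam x (y @ z)),
           (1, [Pw (Ltr None # lift z)], rbrel lam x y), (-1, [Pw (lift x @ [Ltr None])], rbrel lam y z)].
           s \<in> S \<and> starw u \<and> wless (substw u (lead s)) w"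
          using ws wx wy wz st0 st1 st2 by (auto simp: w lead_rbrel[OF nt] intro!: inS wless.tless)
      next
        show "\<forall>v. pmul f (mon a) v - pmul (mon b) g v - 0 =
          sum_list (map (\<lambda>(a, u, s). a * substpoly u s v) [(-1, [Ltr None], rbrel lam (Pw x # y) z), (-1, [Ltr None], rbrel lam (x @ [Pw y]) z),
           (-lam, [Ltr None], rbrel lam (x @ y) z), (1, [Ltr None], rbrel lam x (Pw y # z)),
           (1, [Ltr None], rbrel lam x (y @ [Pw z])), (lam, [Ltr None], rbrel lam x (y @ z)),
           (1, [Pw (Ltr None # lift z)], rbrel lam x y), (-1, [Pw (lift x @ [Ltr None])], rbrel lam y z)])"
          by (simp add: f g' a a1 b b1 z_def[symmetric] pmul_rbrel_mon pmul_mon_rbrel substpoly_rbrel algebra_simps)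
      qed
    next
      fix w u assume h: "starw u \<and> w = lead f \<and> w = substw u (lead g)"
      have e: "[Pw x, Pw y] = substw u [Pw x', Pw y']" using h lf lg by metis
      show "cong_mod S w (\<lambda>v. f v - substpoly u g v) (\<lambda>_. 0)"
        using shape[OF conjunct1[OF h] e]
      proof (elim disjE exE)
        assume u: "u = [Ltr None]"
        then have "x = x'" "y = y'" using e by simp_all
        then show ?thesis unfolding cong_mod_def
          by (intro exI[of _ "[]"]) (simp add: u f g substpoly_rbrel; simp add: rbrel_def)
      next
        fix v1 v2 assume u: "u = [Pw v1, Pw v2]"
        have xe: "x = substw v1 [Pw x', Pw y']" and ye: "y = substw v2 [Pw x', Pw y']" using e u by simp_all
        have wv: "wfw v1" "wfw v2" using h u by (auto simp: starw_def wfw_def)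
        have ns: "sum_list (map nstar v1) + sum_list (map nstar v2) = 1" using h u by (simp add: starw_def)
        have nsu: "sum_list (map nstar u) = 1" using h by (simp add: starw_def)
        have wh: "wfw [Pw (Pw x' # y')]" "wfw [Pw (x' @ [Pw y'])]" "wfw [Pw (x' @ y')]"
          using wx' wy' by (auto simp: wfw_def)
        have ml: "wless (substw u H) (substw u [Pw x', Pw y'])" if "tcount H = 1" for H
          using mono_word[OF nsu, of H] that by simp
        have W: "starw [Pw (Pw v1 # v2)]" "starw [Pw (v1 @ [Pw v2])]" "starw [Pw (v1 @ v2)]"
          using wv ns by (auto simp: starw_def wfw_def)
        have weq: "w = [Pw (substw v1 [Pw x', Pw y']), Pw (substw v2 [Pw x', Pw y'])]"
          using h lf xe ye by simp
        have t1: "\<And>A B C. wless [Pw A] [Pw B, Pw C]" by (rule wless.tless) simp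
        have m1: "wless [Pw (substw v1 [Pw (Pw x' # y')]), Pw (substw v2 [Pw (Pw x' # y')])] [Pw (substw v1 [Pw x', Pw y']), Pw (substw v2 [Pw x', Pw y'])]"
          using ml[of "[Pw (Pw x' # y')]"] u by simp
        have m2: "wless [Pw (substw v1 [Pw (x' @ [Pw y'])]), Pw (substw v2 [Pw (x' @ [Pw y'])])] [Pw (substw v1 [Pw x', Pw y']), Pw (substw v2 [Pw x', Pw y'])]"
          using ml[of "[Pw (x' @ [Pw y'])]"] u by simp
        have m3: "wless [Pw (substw v1 [Pw (x' @ y')]), Pw (substw v2 [Pw (x' @ y')])] [Pw (substw v1 [Pw x', Pw y']), Pw (substw v2 [Pw x', Pw y'])]"
          using ml[of "[Pw (x' @ y')]"] u by simp
        have i1: "rbrel lam (substw v1 [Pw (Pw x' # y')]) (substw v2 [Pw (Pw x' # y')]) \<in> S"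
          using wv wh by (intro inS wfw_subst) auto
        have i2: "rbrel lam (substw v1 [Pw (x' @ [Pw y'])]) (substw v2 [Pw (x' @ [Pw y'])]) \<in> S"
          using wv wh by (intro inS wfw_subst) auto
        have i3: "rbrel lam (substw v1 [Pw (x' @ y')]) (substw v2 [Pw (x' @ y')]) \<in> S"
          using wv wh by (intro inS wfw_subst) auto
        show ?thesis unfolding cong_mod_def
        proof (rule exI[where x="[(1, [Ltr None], rbrel lam (substw v1 [Pw (Pw x' # y')]) (substw v2 [Pw (Pw x' # y')])),
            (1, [Ltr None], rbrel lam (substw v1 [Pw (x' @ [Pw y'])]) (substw v2 [Pw (x' @ [Pw y'])])),
            (lam, [Ltr None], rbrel lam (substw v1 [Pw (x' @ y')]) (substw v2 [Pw (x' @ y')])),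
            (-1, [Pw (Pw v1 # v2)], g), (-1, [Pw (v1 @ [Pw v2])], g), (-lam, [Pw (v1 @ v2)], g)]"],
          intro conjI)
          show "\<forall>(a, u, s)\<in>set [(1, [Ltr None], rbrel lam (substw v1 [Pw (Pw x' # y')]) (substw v2 [Pw (Pw x' # y')])),
            (1, [Ltr None], rbrel lam (substw v1 [Pw (x' @ [Pw y'])]) (substw v2 [Pw (x' @ [Pw y'])])),
            (lam, [Ltr None], rbrel lam (substw v1 [Pw (x' @ y')]) (substw v2 [Pw (x' @ y')])),
            (-1, [Pw (Pw v1 # v2)], g), (-1, [Pw (v1 @ [Pw v2])], g), (-lam, [Pw (v1 @ v2)], g)].
           s \<in> S \<and> starw u \<and> wless (substw u (lead s)) w"
            using m1 m2 m3 i1 i2 i3 st0 W gS by (simp add: weq g lead_rbrel[OF nt] t1)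
        next
          show "\<forall>v. f v - substpoly u g v - 0 =
            sum_list (map (\<lambda>(a, u, s). a * substpoly u s v) [(1, [Ltr None], rbrel lam (substw v1 [Pw (Pw x' # y')]) (substw v2 [Pw (Pw x' # y')])),
            (1, [Ltr None], rbrel lam (substw v1 [Pw (x' @ [Pw y'])]) (substw v2 [Pw (x' @ [Pw y'])])),
            (lam, [Ltr None], rbrel lam (substw v1 [Pw (x' @ y')]) (substw v2 [Pw (x' @ y')])),
            (-1, [Pw (Pw v1 # v2)], g), (-1, [Pw (v1 @ [Pw v2])], g), (-lam, [Pw (v1 @ v2)], g)])"
            using ns nsu by (simp add: f g substpoly_rbrel; simp add: u xe ye rbrel_def algebra_simps)
        qed
      qed
    qed
  qed
  then show ?thesis by (simp add: S_def)
qed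

end
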